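(* Let $\mathscr P$ be a polymatroid and fix a lexicographic order on $\mathbb N^p$. Then $\displaystyle\sum_{\mathbf n\in I(\mathscr P)}(-1)^{\mathrm{rk}(\mathscr P)-|\mathbf n|}c_{\mathbf n}(\mathscr P)=1$.
   Context: Notation: $[p]=\{1,\dots,p\}$; $\mathbf e_i$ is the $i$th standard basis vector; $\mathbf e_J=\sum_{j\in J}\mathbf e_j$; $|\mathbf n|=n_1+\dots+n_p$; $\le$ is componentwise. Polymatroid: a finite set $\mathscr P\subseteq\mathbb N^p$ that is homogeneous (all $\mathbf u\in\mathscr P$ have the same $|\mathbf u|$, the rank $\mathrm{rk}(\mathscr P)$) and M-convex: for all $\mathbf u,\mathbf v\in\mathscr P$ and $i$ with $u_i>v_i$ there is $j$ with $u_j<v_j$ and $\mathbf u-\mathbf e_i+\mathbf e_j\in\mathscr P$. $I(\mathscr P)=\{\mathbf n\in\mathbb N^p:\mathbf n\le\mathbf u\text{ for some }\mathbf u\in\mathscr P\}$. Lexicographic orders: given a total ordering $\sigma_1,\dots,\sigma_p$ of $[p]$, $\mathbf u\prec\mathbf v$ iff $\mathbf u\neq\mathbf v$ and at the first index (in the order $\sigma_1,\sigma_2,\dots$) where they differ, $\mathbf u$ has the smaller entry. Stalactites: for $\mathbf u\in\mathscr P$, $V\subseteq\mathscr P$, $L(\mathbf u;V)=\{\ell\in[p]:\mathbf u-\mathbf e_\ell+\mathbf e_j\in V\text{ for some }j\}$, $\mathrm{St}(\mathbf u;V)=\{\mathbf u-\mathbf e_J:J\subseteq L(\mathbf u;V)\}$.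 With $\mathscr P=\{\mathbf a_1\prec\dots\prec\mathbf a_r\}$, $c_{\mathbf n}(\mathscr P)$ is the number of $k$ with $\mathbf n\in\mathrm{St}(\mathbf a_k;\{\mathbf a_1,\dots,\mathbf a_{k-1}\})$. *)

theory Defs
  imports Main
begin

text \<open>Vectors in N^p are functions nat => nat supported on [p] = {1..p}.\<close>

definition vecs :: "nat \<Rightarrow> (nat \<Rightarrow> nat) set" where
  "vecs p = {u. \<forall>i. i \<notin> {1..p} \<longrightarrow> u i = 0}"

definition unitv :: "nat \<Rightarrow> nat \<Rightarrow> nat" ("\<e>") where
  "unitv i = (\<lambda>k. if k = i then 1 else 0)"

definition unitset :: "nat set \<Rightarrow> nat \<Rightarrow> nat" where
  "unitset J = (\<lambda>k. if k \<in> J then 1 else 0)"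

definition vnorm :: "nat \<Rightarrow> (nat \<Rightarrow> nat) \<Rightarrow> nat" where
  "vnorm p u = (\<Sum>i\<in>{1..p}. u i)"

text \<open>u - e_i + e_j, used only when u i \<ge> 1 (so it stays in N^p).\<close>
definition exch :: "(nat \<Rightarrow> nat) \<Rightarrow> nat \<Rightarrow> nat \<Rightarrow> nat \<Rightarrow> nat" where
  "exch u i j = (\<lambda>k. u k - unitv i k + unitv j k)"

definition polymatroid :: "nat \<Rightarrow> (nat \<Rightarrow> nat) set \<Rightarrow> bool" where
  "polymatroid p P \<longleftrightarrow>
     finite P \<and> P \<noteq> {} \<and> P \<subseteq> vecs p \<and>
     (\<forall>u\<in>P. \<forall>v\<in>P. vnorm p u = vnorm p v) \<and>
     (\<forall>u\<in>P. \<forall>v\<in>P. \<forall>i\<in>{1..p}. u i > v i \<longrightarrow>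
        (\<exists>j\<in>{1..p}. u j < v j \<and> exch u i j \<in> P))"

definition rk :: "nat \<Rightarrow> (nat \<Rightarrow> nat) set \<Rightarrow> nat" where
  "rk p P = vnorm p (SOME u. u \<in> P)"

definition Iset :: "nat \<Rightarrow> (nat \<Rightarrow> nat) set \<Rightarrow> (nat \<Rightarrow> nat) set" where
  "Iset p P = {n \<in> vecs p. \<exists>u\<in>P. \<forall>i. n i \<le> u i}"

definition lex_less :: "nat \<Rightarrow> (nat \<Rightarrow> nat) \<Rightarrow> (nat \<Rightarrow> nat) \<Rightarrow> (nat \<Rightarrow> nat) \<Rightarrow> bool" where
  "lex_less p \<sigma> u v \<longleftrightarrow> u \<noteq> v \<and>
     (\<exists>k\<in>{1..p}. (\<forall>m\<in>{1..p}. m < k \<longrightarrow> u (\<sigma> m) = v (\<sigma> m)) \<and> u (\<sigma> k) < v (\<sigma> k))"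

definition Lset :: "nat \<Rightarrow> (nat \<Rightarrow> nat) \<Rightarrow> (nat \<Rightarrow> nat) set \<Rightarrow> nat set" where
  "Lset p u V = {l \<in> {1..p}. u l \<ge> 1 \<and> (\<exists>j\<in>{1..p}. exch u l j \<in> V)}"

definition St :: "nat \<Rightarrow> (nat \<Rightarrow> nat) \<Rightarrow> (nat \<Rightarrow> nat) set \<Rightarrow> (nat \<Rightarrow> nat) set" where
  "St p u V = {(\<lambda>k. u k - unitset J k) | J. J \<subseteq> Lset p u V}"

text \<open>c_n(P): number of k with n in St(a_k; {a_1,...,a_(k-1)}), where a_1 < ... < a_r
  enumerates P in the lexicographic order; {a_1..a_(k-1)} = {v in P. v < a_k}.\<close>
definition cnum :: "nat \<Rightarrow> (nat \<Rightarrow> nat) \<Rightarrow> (nat \<Rightarrow> nat) set \<Rightarrow> (nat \<Rightarrow> nat) \<Rightarrow> nat" where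
  "cnum p \<sigma> P n = card {u \<in> P. n \<in> St p u {v \<in> P. lex_less p \<sigma> v u}}"

end

theory Submission
  imports Defs "HOL-Library.FuncSet"
begin

lemma alt_sum:
  assumes "finite L"
  shows "(\<Sum>J\<in>Pow L. (-1::int) ^ card J) = (if L = {} then 1 else 0)"
  using assms
proof (induction L rule: finite_induct)
  case empty
  then show ?case by simp
next
  case (insert x F)
  have "Pow (insert x F) = Pow F \<union> insert x ` Pow F" by (rule Pow_insert)
  moreover have "Pow F \<inter> insert x ` Pow F = {}" using insert by auto
  moreover have "inj_on (insert x) (Pow F)" using insert by (auto simp: inj_on_def)
  ultimately have "(\<Sum>J\<in>Pow (insert x F). (-1::int) ^ card J)
     = (\<Sum>J\<in>Pow F. (-1::int) ^ card J) + (\<Sum>J\<in>Pow F. (-1::int) ^ card (insert x J))"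
    using insert by (simp add: sum.union_disjoint sum.reindex)
  also have "(\<Sum>J\<in>Pow F. (-1::int) ^ card (insert x J)) = - (\<Sum>J\<in>Pow F. (-1::int) ^ card J)"
    by (subst sum_negf[symmetric], rule sum.cong, auto simp: card_insert_if insert finite_subset
        dest: finite_subset[OF _ insert(1)])
  finally show ?case by simp
qed

lemma lex_trans:
  assumes "lex_less p \<sigma> u v" "lex_less p \<sigma> v w"
  shows "lex_less p \<sigma> u w"
proof -
  obtain k1 where k1: "k1 \<in> {1..p}" "\<forall>m\<in>{1..p}. m < k1 \<longrightarrow> u (\<sigma> m) = v (\<sigma> m)" "u (\<sigma> k1) < v (\<sigma> k1)"
    using assms(1) unfolding lex_less_def by blast
  obtain k2 where k2: "k2 \<in> {1..p}" "\<forall>m\<in>{1..p}. m < k2 \<longrightarrow> v (\<sigma> m) = w (\<sigma> m)" "v (\<sigma> k2) < w (\<sigma> k2)"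
    using assms(2) unfolding lex_less_def by blast
  define k where "k = min k1 k2"
  have "k \<in> {1..p}" using k1 k2 by (auto simp: k_def)
  moreover have "\<forall>m\<in>{1..p}. m < k \<longrightarrow> u (\<sigma> m) = w (\<sigma> m)" using k1 k2 by (auto simp: k_def)
  moreover have "u (\<sigma> k) < w (\<sigma> k)"
  proof (cases "k1 < k2")
    case True
    then show ?thesis using k1 k2 by (auto simp: k_def)
  next
    case False
    then show ?thesis using k1 k2 by (cases "k1 = k2") (auto simp: k_def)
  qed
  ultimately show ?thesis unfolding lex_less_def by force
qed

lemma lex_total:
  assumes "bij_betw \<sigma> {1..p} {1..p}" "u \<in> vecs p" "w \<in> vecs p" "u \<noteq> w"
  shows "lex_less p \<sigma> u w \<or> lex_less p \<sigma> w u"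
proof -
  obtain i where i: "u i \<noteq> w i" using assms(4) by (auto simp: fun_eq_iff)
  have "i \<in> {1..p}"
  proof (rule ccontr)
    assume "i \<notin> {1..p}"
    then have "u i = 0" "w i = 0" using assms(2,3) unfolding vecs_def by auto
    then show False using i by simp
  qed
  moreover have "\<sigma> ` {1..p} = {1..p}" using assms(1) by (simp add: bij_betw_def)
  ultimately obtain m where m: "m \<in> {1..p}" "\<sigma> m = i" by (metis imageE)
  define k where "k = (LEAST k. k \<in> {1..p} \<and> u (\<sigma> k) \<noteq> w (\<sigma> k))"
  have ex: "m \<in> {1..p} \<and> u (\<sigma> m) \<noteq> w (\<sigma> m)" using m i by simp
  have kp: "k \<in> {1..p} \<and> u (\<sigma> k) \<noteq> w (\<sigma> k)" unfolding k_def by (rule LeastI[where P="\<lambda>k. k \<in> {1..p} \<and> u (\<sigma> k) \<noteq> w (\<sigma> k)", OF ex])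
  have kl: "\<forall>m'\<in>{1..p}. m' < k \<longrightarrow> u (\<sigma> m') = w (\<sigma> m')"
    unfolding k_def using not_less_Least by blast
  show ?thesis
  proof (cases "u (\<sigma> k) < w (\<sigma> k)")
    case True
    then show ?thesis using kp kl assms(4) unfolding lex_less_def by blast
  next
    case False
    then have "w (\<sigma> k) < u (\<sigma> k)" using kp by simp
    moreover have "\<forall>m'\<in>{1..p}. m' < k \<longrightarrow> w (\<sigma> m') = u (\<sigma> m')" using kl by simp
    ultimately have "lex_less p \<sigma> w u" using kp assms(4) unfolding lex_less_def by blast
    then show ?thesis by simp
  qed
qed

lemma key_L:
  assumes poly: "polymatroid p P" and bij: "bij_betw \<sigma> {1..p} {1..p}"
    and uP: "u \<in> P" and vP: "v \<in> P" and vu: "lex_less p \<sigma> v u"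
  shows "Lset p u {v \<in> P. lex_less p \<sigma> v u} \<noteq> {}"
proof -
  obtain k where k: "k \<in> {1..p}" "\<forall>m\<in>{1..p}. m < k \<longrightarrow> v (\<sigma> m) = u (\<sigma> m)" "v (\<sigma> k) < u (\<sigma> k)"
    using vu unfolding lex_less_def by blast
  have img: "\<sigma> ` {1..p} = {1..p}" using bij by (simp add: bij_betw_def)
  have injs: "inj_on \<sigma> {1..p}" using bij by (simp add: bij_betw_def)
  define i where "i = \<sigma> k"
  have ip: "i \<in> {1..p}" using k(1) img i_def by blast
  have "u i > v i" using k(3) i_def by simp
  then obtain j where j: "j \<in> {1..p}" "u j < v j" "exch u i j \<in> P"
    using poly ip uP vP unfolding polymatroid_def by blast
  obtain m where m: "m \<in> {1..p}" "\<sigma> m = j" using j(1) img by (metis imageE)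
  have "m \<noteq> k" using m j k i_def by auto
  moreover have "\<not> m < k" using m j k by auto
  ultimately have mk: "k < m" by simp
  have ij: "i \<noteq> j" using \<open>m \<noteq> k\<close> injs m k i_def by (metis inj_on_def)
  define w where "w = exch u i j"
  have ui: "u i \<ge> 1" using \<open>u i > v i\<close> by simp
  have wi: "w i = u i - 1" using ij unfolding w_def exch_def unitv_def by simp
  have agree: "\<forall>m'\<in>{1..p}. m' < k \<longrightarrow> w (\<sigma> m') = u (\<sigma> m')"
  proof (intro ballI impI)
    fix m' assume m': "m' \<in> {1..p}" "m' < k"
    have "\<sigma> m' \<noteq> i" using m' k injs i_def by (metis inj_on_def less_irrefl)
    moreover have "\<sigma> m' \<noteq> j" using m' m mk injs by (metis inj_on_def less_trans less_irrefl)
    ultimately show "w (\<sigma> m') = u (\<sigma> m')" unfolding w_def exch_def unitv_def by simp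
  qed
  have "w (\<sigma> k) < u (\<sigma> k)" using wi ui i_def by simp
  moreover have "w \<noteq> u" using wi ui by (metis diff_less less_numeral_extra(1) less_irrefl le_numeral_extra(2) not_one_le_zero zero_less_iff_neq_zero)
  ultimately have "lex_less p \<sigma> w u" using agree k(1) unfolding lex_less_def by blast
  then have "i \<in> Lset p u {v \<in> P. lex_less p \<sigma> v u}"
    using ip ui j w_def unfolding Lset_def by blast
  then show ?thesis by blast
qed

lemma finite_box:
  "finite {n \<in> vecs p. \<forall>i. n i \<le> (u::nat\<Rightarrow>nat) i}"
proof -
  let ?B = "{n \<in> vecs p. \<forall>i. n i \<le> u i}"
  have "inj_on (\<lambda>n. restrict n {1..p}) ?B"
  proof (rule inj_onI)
    fix x y assume x: "x \<in> ?B" and y: "y \<in> ?B" and e: "restrict x {1..p} = restrict y {1..p}"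
    show "x = y"
    proof
      fix i show "x i = y i"
      proof (cases "i \<in> {1..p}")
        case True then show ?thesis using e by (metis restrict_apply')
      next
        case False then show ?thesis using x y by (simp add: vecs_def)
      qed
    qed
  qed
  moreover have "(\<lambda>n. restrict n {1..p}) ` ?B \<subseteq> PiE {1..p} (\<lambda>i. {0..u i})"
    by auto
  moreover have "finite (PiE {1..p} (\<lambda>i. {0..u i}))" by (rule finite_PiE) auto
  ultimately show ?thesis by (meson finite_imageD finite_subset)
qed

lemma norm_sub:
  assumes J: "J \<subseteq> {1..p}" and uJ: "\<forall>l\<in>J. u l \<ge> 1"
  shows "vnorm p (\<lambda>k. u k - unitset J k) = vnorm p u - card J" "card J \<le> vnorm p u"
proof -
  have le: "\<And>i. unitset J i \<le> u i" using uJ unfolding unitset_def by auto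
  have cJ: "(\<Sum>i\<in>{1..p}. unitset J i) = card J"
  proof -
    have "(\<Sum>i\<in>{1..p}. unitset J i) = (\<Sum>i\<in>{1..p}. if i \<in> J then 1 else 0)" unfolding unitset_def by simp
    also have "\<dots> = card ({1..p} \<inter> J)" by (simp add: sum.If_cases)
    also have "\<dots> = card J" using J by (simp add: Int_absorb1)
    finally show ?thesis .
  qed
  show "vnorm p (\<lambda>k. u k - unitset J k) = vnorm p u - card J"
    unfolding vnorm_def using le cJ by (simp add: sum_subtractf_nat)
  show "card J \<le> vnorm p u" unfolding vnorm_def using cJ le by (metis sum_mono)
qed

theorem mainTheorem9:
  fixes p :: nat and P :: "(nat \<Rightarrow> nat) set" and \<sigma> :: "nat \<Rightarrow> nat"
  assumes "polymatroid p P"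
    and "bij_betw \<sigma> {1..p} {1..p}"
  shows "(\<Sum>n\<in>Iset p P. (-1::int) ^ (rk p P - vnorm p n) * int (cnum p \<sigma> P n)) = 1"
proof -
  note poly = assms(1) and bij = assms(2)
  have finP: "finite P" and Pv: "P \<subseteq> vecs p" and nz: "P \<noteq> {}"
    and eqn: "\<And>u v. u \<in> P \<Longrightarrow> v \<in> P \<Longrightarrow> vnorm p u = vnorm p v"
  proof -
    have "finite P \<and> P \<noteq> {} \<and> P \<subseteq> vecs p \<and> (\<forall>u\<in>P. \<forall>v\<in>P. vnorm p u = vnorm p v)"
      using poly unfolding polymatroid_def by (elim conjE) (intro conjI)
    then show "finite P" "P \<subseteq> vecs p" "P \<noteq> {}" "\<And>u v. u \<in> P \<Longrightarrow> v \<in> P \<Longrightarrow> vnorm p u = vnorm p v"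
      by blast+
  qed
  have rkeq: "rk p P = vnorm p u" if "u \<in> P" for u
  proof -
    have "(SOME u. u \<in> P) \<in> P" using that by (auto simp: some_in_eq)
    then show ?thesis unfolding rk_def using eqn that by blast
  qed
  define V where "V u = {v \<in> P. lex_less p \<sigma> v u}" for u
  define L where "L u = Lset p u (V u)" for u
  define S where "S u = St p u (V u)" for u
  define I where "I = Iset p P"
  define f where "f n = (-1::int) ^ (rk p P - vnorm p n)" for n
  have finI: "finite I"
  proof -
    have "I \<subseteq> (\<Union>u\<in>P. {n \<in> vecs p. \<forall>i. n i \<le> u i})" unfolding I_def Iset_def by blast
    moreover have "finite (\<Union>u\<in>P. {n \<in> vecs p. \<forall>i. n i \<le> u i})"
      using finP finite_box by blast
    ultimately show ?thesis by (rule finite_subset)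
  qed
  have Lprop: "L u \<subseteq> {1..p}" "\<forall>l\<in>L u. u l \<ge> 1" for u
    unfolding L_def Lset_def by auto
  have SI: "S u \<subseteq> I" if uP: "u \<in> P" for u
  proof
    fix n assume "n \<in> S u"
    then obtain J where n: "n = (\<lambda>k. u k - unitset J k)" unfolding S_def St_def by blast
    have "u \<in> vecs p" using uP Pv by blast
    then have "n \<in> vecs p" unfolding n vecs_def by auto
    moreover have "\<forall>i. n i \<le> u i" unfolding n by simp
    ultimately show "n \<in> I" unfolding I_def Iset_def using uP by blast
  qed
  have inner: "(\<Sum>n\<in>S u. f n) = (if L u = {} then 1 else 0)" if uP: "u \<in> P" for u
  proof -
    define g where "g J = (\<lambda>k. u k - unitset J k)" for J
    have Sg: "S u = g ` Pow (L u)" unfolding S_def St_def g_def L_def by auto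
    have inj: "inj_on g (Pow (L u))"
    proof (rule inj_onI)
      fix J1 J2 assume J1: "J1 \<in> Pow (L u)" and J2: "J2 \<in> Pow (L u)" and e: "g J1 = g J2"
      show "J1 = J2"
      proof (rule ccontr)
        assume "J1 \<noteq> J2"
        then obtain l where l: "(l \<in> J1 \<and> l \<notin> J2) \<or> (l \<in> J2 \<and> l \<notin> J1)" by blast
        then have "l \<in> L u" using J1 J2 by auto
        then have "u l \<ge> 1" using Lprop by blast
        moreover have "g J1 l = g J2 l" using e by simp
        ultimately show False using l unfolding g_def unitset_def by auto
      qed
    qed
    have "(\<Sum>n\<in>S u. f n) = (\<Sum>J\<in>Pow (L u). f (g J))" unfolding Sg using inj by (simp add: sum.reindex)
    also have "\<dots> = (\<Sum>J\<in>Pow (L u). (-1::int) ^ card J)"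
    proof (rule sum.cong)
      fix J assume "J \<in> Pow (L u)"
      then have J: "J \<subseteq> {1..p}" "\<forall>l\<in>J. u l \<ge> 1" using Lprop by blast+
      show "f (g J) = (-1::int) ^ card J"
        unfolding f_def g_def rkeq[OF uP] norm_sub[OF J] using norm_sub(2)[OF J] by simp
    qed simp
    also have "\<dots> = (if L u = {} then 1 else 0)"
      by (rule alt_sum) (meson Lprop(1) finite_atLeastAtMost finite_subset)
    finally show ?thesis .
  qed
  have count: "card {u \<in> P. L u = {}} = 1"
  proof -
    define r where "r = {(v,u). v \<in> P \<and> u \<in> P \<and> lex_less p \<sigma> v u}"
    have "r \<subseteq> P \<times> P" unfolding r_def by auto
    then have "finite r" using finP by (meson finite_SigmaI finite_subset)
    moreover have "trans r" unfolding r_def trans_def using lex_trans by blast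
    moreover have "irrefl r" unfolding r_def irrefl_def lex_less_def by blast
    ultimately have "acyclic r" by (simp add: acyclic_irrefl)
    then have "wf r" using \<open>finite r\<close> by (simp add: wf_iff_acyclic_if_finite)
    then obtain u0 where u0: "u0 \<in> P" "\<And>y. (y, u0) \<in> r \<Longrightarrow> y \<notin> P"
      using nz by (metis ex_in_conv wfE_min)
    have "V u0 = {}" using u0 unfolding V_def r_def by blast
    then have L0: "L u0 = {}" unfolding L_def Lset_def by blast
    have "{u \<in> P. L u = {}} = {u0}"
    proof (intro equalityI subsetI)
      fix u assume uu: "u \<in> {u \<in> P. L u = {}}"
      show "u \<in> {u0}"
      proof (rule ccontr)
        assume "u \<notin> {u0}"
        then have "lex_less p \<sigma> u0 u \<or> lex_less p \<sigma> u u0"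
          using lex_total[OF bij] uu u0 Pv by blast
        moreover have "\<not> lex_less p \<sigma> u u0" using u0 uu unfolding r_def by blast
        ultimately have "lex_less p \<sigma> u0 u" by blast
        then have "L u \<noteq> {}" unfolding L_def V_def using key_L[OF poly bij] uu u0 by blast
        then show False using uu by blast
      qed
    qed (use u0 L0 in auto)
    then show ?thesis by simp
  qed
  have "(\<Sum>n\<in>I. f n * int (cnum p \<sigma> P n)) = (\<Sum>n\<in>I. \<Sum>u\<in>P. if n \<in> S u then f n else 0)"
  proof (rule sum.cong)
    fix n assume "n \<in> I"
    have "(\<Sum>u\<in>P. if n \<in> S u then f n else 0) = (\<Sum>u\<in>{u\<in>P. n \<in> S u}. f n)"
      using finP by (rule sum.inter_filter[symmetric])
    also have "\<dots> = f n * int (cnum p \<sigma> P n)"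
      unfolding cnum_def S_def V_def by simp
    finally show "f n * int (cnum p \<sigma> P n) = (\<Sum>u\<in>P. if n \<in> S u then f n else 0)" by simp
  qed simp
  also have "\<dots> = (\<Sum>u\<in>P. \<Sum>n\<in>I. if n \<in> S u then f n else 0)" by (rule sum.swap)
  also have "\<dots> = (\<Sum>u\<in>P. \<Sum>n\<in>S u. f n)"
  proof (rule sum.cong)
    fix u assume uP: "u \<in> P"
    have "(\<Sum>n\<in>I. if n \<in> S u then f n else 0) = (\<Sum>n\<in>{n\<in>I. n \<in> S u}. f n)"
      using finI by (rule sum.inter_filter[symmetric])
    also have "{n\<in>I. n \<in> S u} = S u" using SI[OF uP] by blast
    finally show "(\<Sum>n\<in>I. if n \<in> S u then f n else 0) = (\<Sum>n\<in>S u. f n)" .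
  qed simp
  also have "\<dots> = (\<Sum>u\<in>P. if L u = {} then 1 else 0)" using inner by simp
  also have "\<dots> = int (card {u \<in> P. L u = {}})" using finP by (simp add: sum.inter_filter[symmetric])
  also have "\<dots> = 1" using count by simp
  finally show ?thesis unfolding f_def I_def .
qed

end
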